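(* Let $\beta>0$ and $\mathcal P$ a parameter set. For all $j\in\{0,\dots,r\}$ and all $n\in\mathbb Z$ there exists a constant $0<l^+_{j,n}<\infty$ such that for all $f\in\mathcal H(\beta,\mathcal P)$, $$\sup_{y\in[n\gamma,(n+1)\gamma]}\big|(\ln f)^{(j)}(y)\big|\le l^+_{j,n}.$$
   Context: $\psi(x)=\pi^{-1/2}e^{-x^2}$. For $\beta>0$, $r$ is the largest integer strictly less than $\beta$. A parameter set $\mathcal{P}=\{\gamma,l^+,L,\varepsilon,C,\alpha,\xi,M\}$ consists of a polynomial $L$ and positive constants; $\mathcal H(\beta,\mathcal P)$ is the set of probability densities $f$ on $\mathbb R$ with: $\ln f$ $r$ times differentiable, $|(\ln f)^{(r)}(x)-(\ln f)^{(r)}(y)|\le r!L(x)|y-x|^{\beta-r}$ whenever $|x-y|\le\gamma$, $|(\ln f)^{(j)}(0)|\le l^+$ for $j=0..r$; $\int|(\ln f)^{(j)}|^{(2\beta+\varepsilon)/j}f\le C$ ($j=1..r$), $\int|L|^{2+\varepsilon/\beta}f\le C$; $f\le M\psi$; $f>0$ nondecreasing on $(-\infty,-\alpha)$, nonincreasing on $(\alpha,\infty)$, $f\ge\xi$ on $[-\alpha,\alpha]$. *)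

theory Defs
  imports "HOL-Analysis.Analysis" "HOL-Computational_Algebra.Polynomial"
begin

definition psi :: "real \<Rightarrow> real" where
  "psi x = exp (- (x ^ 2)) / sqrt pi"

text \<open>r = largest integer strictly less than beta (beta > 0).\<close>
definition r_of :: "real \<Rightarrow> nat" where
  "r_of \<beta> = nat (\<lceil>\<beta>\<rceil> - 1)"

definition lnder :: "nat \<Rightarrow> (real \<Rightarrow> real) \<Rightarrow> real \<Rightarrow> real" where
  "lnder j f = (deriv ^^ j) (\<lambda>x. ln (f x))"

definition HolderClass ::
  "real \<Rightarrow> real \<Rightarrow> real \<Rightarrow> real poly \<Rightarrow> real \<Rightarrow> real \<Rightarrow> real \<Rightarrow> real \<Rightarrow> real
     \<Rightarrow> (real \<Rightarrow> real) set" where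
  "HolderClass \<beta> \<gamma> lp L \<epsilon> C \<alpha> \<xi> M = {f.
     \<comment> \<open>probability density on R\<close>
     f \<in> borel_measurable borel \<and> (\<forall>x. 0 \<le> f x) \<and>
     (\<integral>\<^sup>+ x. ennreal (f x) \<partial>lborel) = 1 \<and>
     \<comment> \<open>ln f is r times differentiable\<close>
     (\<forall>j < r_of \<beta>. \<forall>x. lnder j f differentiable at x) \<and>
     \<comment> \<open>local Hoelder condition on the r-th derivative\<close>
     (\<forall>x y. \<bar>x - y\<bar> \<le> \<gamma> \<longrightarrow>
        \<bar>lnder (r_of \<beta>) f x - lnder (r_of \<beta>) f y\<bar>
          \<le> fact (r_of \<beta>) * poly L x * \<bar>y - x\<bar> powr (\<beta> - real (r_of \<beta>))) \<and>
     (\<forall>j \<le> r_of \<beta>. \<bar>lnder j f 0\<bar> \<le> lp) \<and>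
     (\<forall>j \<in> {1..r_of \<beta>}.
        (\<integral>\<^sup>+ x. ennreal (\<bar>lnder j f x\<bar> powr ((2 * \<beta> + \<epsilon>) / real j) * f x) \<partial>lborel)
          \<le> ennreal C) \<and>
     (\<integral>\<^sup>+ x. ennreal (\<bar>poly L x\<bar> powr (2 + \<epsilon> / \<beta>) * f x) \<partial>lborel) \<le> ennreal C \<and>
     (\<forall>x. f x \<le> M * psi x) \<and>
     (\<forall>x. x < - \<alpha> \<longrightarrow> 0 < f x) \<and> (\<forall>x. \<alpha> < x \<longrightarrow> 0 < f x) \<and>
     mono_on {..< - \<alpha>} f \<and> antimono_on {\<alpha> <..} f \<and>
     (\<forall>x \<in> {-\<alpha>..\<alpha>}. \<xi> \<le> f x)}"

end

theory Submission
  imports Defs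
begin

lemma r_of_lt: "0 < \<beta> \<Longrightarrow> real (r_of \<beta>) < \<beta>"
  unfolding r_of_def
proof -
  assume "0 < \<beta>"
  then have "1 \<le> \<lceil>\<beta>\<rceil>" by (simp add: one_le_ceiling)
  then have "real (nat (\<lceil>\<beta>\<rceil> - 1)) = real_of_int \<lceil>\<beta>\<rceil> - 1" by simp
  also have "\<dots> < \<beta>" by linarith
  finally show "real (nat (\<lceil>\<beta>\<rceil> - 1)) < \<beta>" .
qed

lemma lnder_Suc: "lnder (Suc j) f = deriv (lnder j f)"
  unfolding lnder_def by simp

lemma top_bound:
  assumes f: "f \<in> HolderClass \<beta> \<gamma> lp L \<epsilon> C \<alpha> \<xi> M"
    and g: "0 < \<gamma>" and b: "0 < \<beta>" and B: "\<forall>x. \<bar>x\<bar> \<le> real K * \<gamma> \<longrightarrow> \<bar>poly L x\<bar> \<le> B"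
  shows "k \<le> K \<Longrightarrow> \<bar>y\<bar> \<le> real k * \<gamma> \<Longrightarrow>
     \<bar>lnder (r_of \<beta>) f y\<bar> \<le> lp + real k * (fact (r_of \<beta>) * B * \<gamma> powr (\<beta> - real (r_of \<beta>)))"
proof (induction k arbitrary: y)
  case 0
  have "\<forall>j \<le> r_of \<beta>. \<bar>lnder j f 0\<bar> \<le> lp" using f unfolding HolderClass_def by blast
  then show ?case using 0 by simp
next
  case (Suc k)
  define x where "x = max (- (real k * \<gamma>)) (min (real k * \<gamma>) y)"
  have kg: "0 \<le> real k * \<gamma>" using g by simp
  have x1: "\<bar>x\<bar> \<le> real k * \<gamma>" unfolding x_def using kg by auto
  have x2: "\<bar>x - y\<bar> \<le> \<gamma>" 
  proof (cases "y > real k * \<gamma>")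
    case True then show ?thesis using Suc.prems(2) kg g unfolding x_def by (simp add: algebra_simps)
  next
    case False
    show ?thesis
    proof (cases "y < - (real k * \<gamma>)")
      case True then show ?thesis using Suc.prems(2) kg g unfolding x_def by (simp add: algebra_simps)
    next
      case False2: False
      then have "x = y" unfolding x_def using False by simp
      then show ?thesis using g by simp
    qed
  qed
  have IH: "\<bar>lnder (r_of \<beta>) f x\<bar> \<le> lp + real k * (fact (r_of \<beta>) * B * \<gamma> powr (\<beta> - real (r_of \<beta>)))"
    using Suc x1 by simp
  have H: "\<bar>lnder (r_of \<beta>) f x - lnder (r_of \<beta>) f y\<bar>
          \<le> fact (r_of \<beta>) * poly L x * \<bar>y - x\<bar> powr (\<beta> - real (r_of \<beta>))"
    using f x2 unfolding HolderClass_def by blast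
  have "real k * \<gamma> \<le> real K * \<gamma>" using Suc.prems(1) g by (intro mult_right_mono) auto
  then have "\<bar>x\<bar> \<le> real K * \<gamma>" using x1 by linarith
  then have pL: "poly L x \<le> B" using B by force
  have e: "0 \<le> \<beta> - real (r_of \<beta>)" using r_of_lt[OF b] by simp
  have pw: "\<bar>y - x\<bar> powr (\<beta> - real (r_of \<beta>)) \<le> \<gamma> powr (\<beta> - real (r_of \<beta>))"
    using powr_mono2[OF e] x2 by (simp add: abs_minus_commute)
  have "fact (r_of \<beta>) * poly L x * \<bar>y - x\<bar> powr (\<beta> - real (r_of \<beta>))
      \<le> fact (r_of \<beta>) * B * \<gamma> powr (\<beta> - real (r_of \<beta>))"

  proof -
    have B0: "0 \<le> B" using B[rule_format, of x] \<open>\<bar>x\<bar> \<le> real K * \<gamma>\<close> by linarith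
    have "fact (r_of \<beta>) * poly L x * \<bar>y - x\<bar> powr (\<beta> - real (r_of \<beta>))
       \<le> fact (r_of \<beta>) * B * \<bar>y - x\<bar> powr (\<beta> - real (r_of \<beta>))"
      by (intro mult_right_mono mult_left_mono pL) auto
    also have "\<dots> \<le> fact (r_of \<beta>) * B * \<gamma> powr (\<beta> - real (r_of \<beta>))"
      by (intro mult_left_mono pw) (use B0 in auto)
    finally show ?thesis .
  qed
  then have "\<bar>lnder (r_of \<beta>) f x - lnder (r_of \<beta>) f y\<bar> \<le> fact (r_of \<beta>) * B * \<gamma> powr (\<beta> - real (r_of \<beta>))"
    using H by linarith
  then have "\<bar>lnder (r_of \<beta>) f y\<bar> \<le> lp + real k * (fact (r_of \<beta>) * B * \<gamma> powr (\<beta> - real (r_of \<beta>)))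
      + fact (r_of \<beta>) * B * \<gamma> powr (\<beta> - real (r_of \<beta>))" using IH by linarith
  then show ?case by (simp add: distrib_right)
qed

lemma lower_bound:
  assumes f: "f \<in> HolderClass \<beta> \<gamma> lp L \<epsilon> C \<alpha> \<xi> M"
    and R: "0 \<le> R"
    and D: "\<forall>y. \<bar>y\<bar> \<le> R \<longrightarrow> \<bar>lnder (Suc j) f y\<bar> \<le> D"
    and j: "j < r_of \<beta>"
  shows "\<forall>y. \<bar>y\<bar> \<le> R \<longrightarrow> \<bar>lnder j f y\<bar> \<le> lp + R * D"
proof (intro allI impI)
  fix y :: real assume y: "\<bar>y\<bar> \<le> R"
  have dif: "\<forall>x. lnder j f differentiable at x" using f j unfolding HolderClass_def by blast
  have l0: "\<bar>lnder j f 0\<bar> \<le> lp" using f j unfolding HolderClass_def by auto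
  have der: "(lnder j f has_field_derivative lnder (Suc j) f z) (at z within {-R..R})" for z
    unfolding lnder_Suc using dif
    by (simp add: DERIV_deriv_iff_real_differentiable has_field_derivative_at_within)
  have "norm (lnder j f y - lnder j f 0) \<le> D * norm (y - 0)"
    by (rule field_differentiable_bound[OF convex_real_interval(5) der]) (use D y R in auto)
  then have "\<bar>lnder j f y - lnder j f 0\<bar> \<le> D * \<bar>y\<bar>" by simp
  moreover have "0 \<le> D" 
  proof -
    have "\<bar>lnder (Suc j) f 0\<bar> \<le> D" using D R by simp
    then show ?thesis using abs_ge_zero[of "lnder (Suc j) f 0"] by linarith
  qed
  moreover have "D * \<bar>y\<bar> \<le> D * R" using y \<open>0 \<le> D\<close> by (rule mult_left_mono)
  ultimately have "\<bar>lnder j f y - lnder j f 0\<bar> \<le> R * D" by (simp add: mult.commute)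
  then show "\<bar>lnder j f y\<bar> \<le> lp + R * D" using l0 by linarith
qed

theorem lemma11:
  fixes \<beta> \<gamma> lp \<epsilon> C \<alpha> \<xi> M :: real and L :: "real poly"
  assumes "0 < \<beta>" "0 < \<gamma>" "0 < lp" "0 < \<epsilon>" "0 < C" "0 < \<alpha>" "0 < \<xi>" "0 < M"
  shows "\<forall>j \<le> r_of \<beta>. \<forall>n :: int. \<exists>l :: real. 0 < l \<and>
           (\<forall>f \<in> HolderClass \<beta> \<gamma> lp L \<epsilon> C \<alpha> \<xi> M.
              \<forall>y \<in> {real_of_int n * \<gamma> .. (real_of_int n + 1) * \<gamma>}. \<bar>lnder j f y\<bar> \<le> l)"
proof (intro allI impI)
  fix j :: nat and n :: int
  assume j: "j \<le> r_of \<beta>"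
  define K where "K = nat \<bar>n\<bar> + 1"
  define R where "R = real K * \<gamma>"
  have R0: "0 \<le> R" unfolding R_def using assms(2) by simp
  have "compact ((poly L) ` cball 0 R)"
    by (intro compact_continuous_image continuous_intros) auto
  then obtain B where B: "\<forall>z \<in> (poly L) ` cball 0 R. norm z \<le> B"
    using compact_imp_bounded bounded_iff by metis
  have BB: "\<forall>x. \<bar>x\<bar> \<le> real K * \<gamma> \<longrightarrow> \<bar>poly L x\<bar> \<le> B"
    using B unfolding R_def by auto
  define E :: "nat \<Rightarrow> real" where
    "E = rec_nat (lp + real K * (fact (r_of \<beta>) * B * \<gamma> powr (\<beta> - real (r_of \<beta>))))
                 (\<lambda>_ e. lp + R * e)"
  have E0: "E 0 = lp + real K * (fact (r_of \<beta>) * B * \<gamma> powr (\<beta> - real (r_of \<beta>)))"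
    unfolding E_def by simp
  have ES: "E (Suc i) = lp + R * E i" for i unfolding E_def by simp
  have main: "\<forall>f \<in> HolderClass \<beta> \<gamma> lp L \<epsilon> C \<alpha> \<xi> M. \<forall>y. \<bar>y\<bar> \<le> R \<longrightarrow>
       \<bar>lnder (r_of \<beta> - i) f y\<bar> \<le> E i" if "i \<le> r_of \<beta>" for i
    using that
  proof (induction i)
    case 0
    show ?case
    proof (intro ballI allI impI)
      fix f y assume f: "f \<in> HolderClass \<beta> \<gamma> lp L \<epsilon> C \<alpha> \<xi> M" and y: "\<bar>y\<bar> \<le> R"
      show "\<bar>lnder (r_of \<beta> - 0) f y\<bar> \<le> E 0"
        using top_bound[OF f assms(2) assms(1) BB, of K y] y unfolding E0 R_def by simp
    qed
  next
    case (Suc i)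
    have eq: "Suc (r_of \<beta> - Suc i) = r_of \<beta> - i" using Suc.prems by simp
    show ?case
    proof (intro ballI)
      fix f assume f: "f \<in> HolderClass \<beta> \<gamma> lp L \<epsilon> C \<alpha> \<xi> M"
      have "\<forall>y. \<bar>y\<bar> \<le> R \<longrightarrow> \<bar>lnder (Suc (r_of \<beta> - Suc i)) f y\<bar> \<le> E i"
        using Suc f eq by simp
      from lower_bound[OF f R0 this] Suc.prems show "\<forall>y. \<bar>y\<bar> \<le> R \<longrightarrow>
        \<bar>lnder (r_of \<beta> - Suc i) f y\<bar> \<le> E (Suc i)" unfolding ES by simp
    qed
  qed
  have m: "\<forall>f \<in> HolderClass \<beta> \<gamma> lp L \<epsilon> C \<alpha> \<xi> M. \<forall>y. \<bar>y\<bar> \<le> R \<longrightarrow>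
       \<bar>lnder j f y\<bar> \<le> E (r_of \<beta> - j)"
    using main[of "r_of \<beta> - j"] j by simp
  have int: "\<bar>y\<bar> \<le> R" if "y \<in> {real_of_int n * \<gamma> .. (real_of_int n + 1) * \<gamma>}" for y
  proof -
    have "real K = \<bar>real_of_int n\<bar> + 1" unfolding K_def by simp
    then have "R = \<bar>real_of_int n\<bar> * \<gamma> + \<gamma>" unfolding R_def by (simp add: algebra_simps)
    moreover have "\<bar>real_of_int n * \<gamma>\<bar> = \<bar>real_of_int n\<bar> * \<gamma>" using assms(2) by (simp add: abs_mult)
    ultimately show ?thesis using that assms(2) by (auto simp: algebra_simps abs_le_iff)
  qed
  show "\<exists>l. 0 < l \<and> (\<forall>f\<in>HolderClass \<beta> \<gamma> lp L \<epsilon> C \<alpha> \<xi> M.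
          \<forall>y\<in>{real_of_int n * \<gamma>..(real_of_int n + 1) * \<gamma>}. \<bar>lnder j f y\<bar> \<le> l)"

  proof (rule exI[of _ "max 1 (E (r_of \<beta> - j))"], intro conjI ballI)
    fix f y assume f: "f \<in> HolderClass \<beta> \<gamma> lp L \<epsilon> C \<alpha> \<xi> M"
      and y: "y \<in> {real_of_int n * \<gamma>..(real_of_int n + 1) * \<gamma>}"
    have "\<bar>lnder j f y\<bar> \<le> E (r_of \<beta> - j)" using m f int[OF y] by blast
    then show "\<bar>lnder j f y\<bar> \<le> max 1 (E (r_of \<beta> - j))" by linarith
  qed simp
qed

end
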